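(* Let $N\ge 2$ and let $f:\mathbb{C}\to\mathbb{C}^N$ be a holomorphic map whose components are polynomials in $\zeta$ and are linearly independent over $\mathbb{C}$. Define $P_+^0 f=f$, $P_+^{k+1}f=P_+(P_+^k f)$, where $P_+ g=\partial g-g\,\frac{g^\dagger\cdot\partial g}{g^\dagger\cdot g}$ and $\partial=\partial/\partial\zeta$, $\bar\partial=\partial/\partial\bar\zeta$. For $k=0,\dots,N-1$ let $P_k=\frac{P_+^k f\otimes (P_+^k f)^\dagger}{|P_+^k f|^2}$ (defined wherever $P_+^kf\neq 0$). Let $\alpha_0,\dots,\alpha_{N-2}$ be real constants and $\mathbb{P}=\sum_{k=0}^{N-2}\alpha_k P_k$. Then, wherever all these projectors are defined, $$g_{++}:=\operatorname{tr}(\partial\mathbb{P}\,\partial\mathbb{P})=0,\qquad g_{--}:=\operatorname{tr}(\bar\partial\mathbb{P}\,\bar\partial\mathbb{P})=0,$$ i.e. the metric on the surface described by $\mathbb{P}$ (with components $g_{++}$, $g_{+-}=\operatorname{tr}(\partial\mathbb{P}\,\bar\partial\mathbb{P})$, $g_{--}$) has only the mixed component $g_{+-}$ possibly nonzero.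
   Context: Here $\zeta=\zeta_1+i\zeta_2$ is the complex coordinate on the plane obtained from $S^2$ by stereographic projection, $\dagger$ denotes Hermitian conjugation, $g^\dagger\cdot h=\sum_i \bar g^i h^i$, and $|g|^2=g^\dagger\cdot g$. The vectors $P_+^k f$ describe harmonic maps $S^2\to CP^{N-1}$; $\mathbb{P}$ is a Hermitian $N\times N$ matrix-valued function of $(\zeta,\bar\zeta)$, whose real and imaginary parts of entries define a surface in $\mathbb{R}^{N^2-1}$ with induced metric components $g_{++}=\operatorname{tr}(\partial\mathbb{P}\partial\mathbb{P})$, $g_{+-}=\operatorname{tr}(\partial\mathbb{P}\bar\partial\mathbb{P})$, $g_{--}=\overline{g_{++}}$. *)

theory Defs
  imports "HOL-Analysis.Analysis" "HOL-Computational_Algebra.Polynomial"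
begin

definition wirt :: "(complex \<Rightarrow> complex) \<Rightarrow> complex \<Rightarrow> complex" where
  "wirt F z = (frechet_derivative F (at z) 1 - \<i> * frechet_derivative F (at z) \<i>) / 2"

definition wirtbar :: "(complex \<Rightarrow> complex) \<Rightarrow> complex \<Rightarrow> complex" where
  "wirtbar F z = (frechet_derivative F (at z) 1 + \<i> * frechet_derivative F (at z) \<i>) / 2"

text \<open>Vectors in C^N are modelled as nat => complex, only indices < N matter.\<close>
definition herm :: "nat \<Rightarrow> (nat \<Rightarrow> complex) \<Rightarrow> (nat \<Rightarrow> complex) \<Rightarrow> complex" where
  "herm N u v = (\<Sum>i<N. cnj (u i) * v i)"

definition dvec :: "(complex \<Rightarrow> nat \<Rightarrow> complex) \<Rightarrow> complex \<Rightarrow> nat \<Rightarrow> complex" where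
  "dvec g z = (\<lambda>i. wirt (\<lambda>w. g w i) z)"

definition Pplus :: "nat \<Rightarrow> (complex \<Rightarrow> nat \<Rightarrow> complex) \<Rightarrow> complex \<Rightarrow> nat \<Rightarrow> complex" where
  "Pplus N g = (\<lambda>z i. dvec g z i - g z i * herm N (g z) (dvec g z) / herm N (g z) (g z))"

definition proj :: "nat \<Rightarrow> (complex \<Rightarrow> nat \<Rightarrow> complex) \<Rightarrow> nat \<Rightarrow> complex \<Rightarrow> nat \<Rightarrow> nat \<Rightarrow> complex" where
  "proj N f k z i j = (let v = (Pplus N ^^ k) f z in v i * cnj (v j) / herm N v v)"

definition trace_prod :: "nat \<Rightarrow> (nat \<Rightarrow> nat \<Rightarrow> complex) \<Rightarrow> (nat \<Rightarrow> nat \<Rightarrow> complex) \<Rightarrow> complex" where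
  "trace_prod N A B = (\<Sum>i<N. \<Sum>j<N. A i j * B j i)"

end

theory Submission
  imports Defs
begin


datatype tm = C complex | Pol "complex poly" | Add tm tm | Mul tm tm | Inv tm | Cj tm

primrec ev :: "tm \<Rightarrow> complex \<Rightarrow> complex" where
  "ev (C c) x = c"
| "ev (Pol p) x = poly p x"
| "ev (Add a b) x = ev a x + ev b x"
| "ev (Mul a b) x = ev a x * ev b x"
| "ev (Inv a) x = inverse (ev a x)"
| "ev (Cj a) x = cnj (ev a x)"

fun Dt :: "tm \<Rightarrow> tm" and Dbt :: "tm \<Rightarrow> tm" where
  "Dt (C c) = C 0"
| "Dt (Pol p) = Pol (pderiv p)"
| "Dt (Add a b) = Add (Dt a) (Dt b)"
| "Dt (Mul a b) = Add (Mul (Dt a) b) (Mul a (Dt b))"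
| "Dt (Inv a) = Mul (C (-1)) (Mul (Dt a) (Mul (Inv a) (Inv a)))"
| "Dt (Cj a) = Cj (Dbt a)"
| "Dbt (C c) = C 0"
| "Dbt (Pol p) = C 0"
| "Dbt (Add a b) = Add (Dbt a) (Dbt b)"
| "Dbt (Mul a b) = Add (Mul (Dbt a) b) (Mul a (Dbt b))"
| "Dbt (Inv a) = Mul (C (-1)) (Mul (Dbt a) (Mul (Inv a) (Inv a)))"
| "Dbt (Cj a) = Cj (Dt a)"

primrec wft :: "complex set \<Rightarrow> tm \<Rightarrow> bool" where
  "wft U (C c) = True"
| "wft U (Pol p) = True"
| "wft U (Add a b) = (wft U a \<and> wft U b)"
| "wft U (Mul a b) = (wft U a \<and> wft U b)"
| "wft U (Inv a) = (wft U a \<and> (\<forall>x\<in>U. ev a x \<noteq> 0))"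
| "wft U (Cj a) = wft U a"

lemma wft_D: "wft U a \<Longrightarrow> wft U (Dt a) \<and> wft U (Dbt a)"
  by (induction a) auto

lemma wft_mono: "wft U a \<Longrightarrow> V \<subseteq> U \<Longrightarrow> wft V a"
  by (induction a) auto

lemma ev_hd:
  assumes "wft U a" "x \<in> U"
  shows "(ev a has_derivative (\<lambda>h. ev (Dt a) x * h + ev (Dbt a) x * cnj h)) (at x)"
  using assms
proof (induction a)
  case (C c) then show ?case by (simp add: has_derivative_const)
next
  case (Pol p)
  have "((\<lambda>x. poly p x) has_derivative (*) (poly (pderiv p) x)) (at x)"
    using poly_DERIV[of p x] by (simp add: has_field_derivative_def)
  then show ?case by simp
next
  case (Add a b)
  then show ?case
    by (auto intro!: derivative_eq_intros simp: algebra_simps)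
next
  case (Mul a b)
  then have "((\<lambda>y. ev a y * ev b y) has_derivative
     (\<lambda>h. ev a x * (ev (Dt b) x * h + ev (Dbt b) x * cnj h) + (ev (Dt a) x * h + ev (Dbt a) x * cnj h) * ev b x)) (at x)"
    by (intro has_derivative_mult) auto
  then show ?case by (simp add: algebra_simps)
next
  case (Inv a)
  then have nz: "ev a x \<noteq> 0" and hd: "(ev a has_derivative (\<lambda>h. ev (Dt a) x * h + ev (Dbt a) x * cnj h)) (at x)" by auto
  have "((\<lambda>y. inverse (ev a y)) has_derivative
     (\<lambda>h. - (inverse (ev a x) * (ev (Dt a) x * h + ev (Dbt a) x * cnj h) * inverse (ev a x)))) (at x)"
    using Deriv.has_derivative_inverse[OF nz hd] by simp
  then show ?case by (simp add: algebra_simps)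
next
  case (Cj a)
  then have "((\<lambda>y. cnj (ev a y)) has_derivative (\<lambda>h. cnj (ev (Dt a) x * h + ev (Dbt a) x * cnj h))) (at x)"
    by (intro has_derivative_cnj) auto
  then show ?case by (simp add: algebra_simps)
qed

lemma ev_sym:
  assumes "wft U a" "x \<in> U"
  shows "ev (Dbt (Dt a)) x = ev (Dt (Dbt a)) x"
  using assms
proof (induction a)
  case (Inv a)
  then have "ev a x \<noteq> 0" "ev (Dbt (Dt a)) x = ev (Dt (Dbt a)) x" by auto
  then show ?case by (simp add: algebra_simps)
qed (auto simp: algebra_simps)



definition smooth :: "complex set \<Rightarrow> (complex \<Rightarrow> complex) \<Rightarrow> bool" where
  "smooth U g = (\<exists>t. wft U t \<and> (\<forall>x\<in>U. g x = ev t x))"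

lemma wirt_unique:
  assumes "(g has_derivative L) (at x)" "\<And>h. L h = a * h + b * cnj h"
  shows "wirt g x = a \<and> wirtbar g x = b"
proof -
  have "frechet_derivative g (at x) = L" using frechet_derivative_at[OF assms(1)] by simp
  then show ?thesis unfolding wirt_def wirtbar_def using assms(2)
    by (simp add: algebra_simps)
qed

lemma wirt_local:
  assumes "open U" "x \<in> U" "\<And>y. y \<in> U \<Longrightarrow> g y = h y"
  shows "wirt g x = wirt h x \<and> wirtbar g x = wirtbar h x"
proof -
  have 1: "(h has_derivative L) (at x)" if "(g has_derivative L) (at x)" for L
    by (rule has_derivative_transform_within_open[OF that assms(1,2)]) (use assms(3) in auto)
  have 2: "(g has_derivative L) (at x)" if "(h has_derivative L) (at x)" for L
    by (rule has_derivative_transform_within_open[OF that assms(1,2)]) (use assms(3) in auto)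
  have "\<And>L. (g has_derivative L) (at x) \<longleftrightarrow> (h has_derivative L) (at x)"
    using 1 2 by blast
  then have "frechet_derivative g (at x) = frechet_derivative h (at x)"
    unfolding frechet_derivative_def by simp
  then show ?thesis unfolding wirt_def wirtbar_def by simp
qed

lemma smooth_hd_t:
  assumes "open U" "wft U t" "\<forall>x\<in>U. g x = ev t x" "x \<in> U"
  shows "(g has_derivative (\<lambda>h. ev (Dt t) x * h + ev (Dbt t) x * cnj h)) (at x)"
  using has_derivative_transform_within_open[OF ev_hd[OF assms(2,4)] assms(1,4)] assms(3) by auto

lemma smooth_wirt_t:
  assumes "open U" "wft U t" "\<forall>x\<in>U. g x = ev t x" "x \<in> U"
  shows "wirt g x = ev (Dt t) x \<and> wirtbar g x = ev (Dbt t) x"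
  by (rule wirt_unique[OF smooth_hd_t[OF assms]]) simp

lemma smooth_hd:
  assumes "open U" "smooth U g" "x \<in> U"
  shows "(g has_derivative (\<lambda>h. wirt g x * h + wirtbar g x * cnj h)) (at x)"
proof -
  obtain t where t: "wft U t" "\<forall>x\<in>U. g x = ev t x" using assms unfolding smooth_def by auto
  show ?thesis using smooth_hd_t[OF assms(1) t assms(3)] smooth_wirt_t[OF assms(1) t assms(3)] by simp
qed

lemma smooth_wirt [intro]:
  assumes "open U" "smooth U g"
  shows "smooth U (wirt g)" "smooth U (wirtbar g)"
proof -
  obtain t where t: "wft U t" "\<forall>x\<in>U. g x = ev t x" using assms unfolding smooth_def by auto
  show "smooth U (wirt g)" unfolding smooth_def
    using smooth_wirt_t[OF assms(1) t] wft_D[OF t(1)] by blast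
  show "smooth U (wirtbar g)" unfolding smooth_def
    using smooth_wirt_t[OF assms(1) t] wft_D[OF t(1)] by blast
qed

lemma smooth_sym:
  assumes "open U" "smooth U g" "x \<in> U"
  shows "wirtbar (wirt g) x = wirt (wirtbar g) x"
proof -
  obtain t where t: "wft U t" "\<forall>x\<in>U. g x = ev t x" using assms unfolding smooth_def by auto
  have 1: "\<forall>y\<in>U. wirt g y = ev (Dt t) y" "\<forall>y\<in>U. wirtbar g y = ev (Dbt t) y"
    using smooth_wirt_t[OF assms(1) t] by auto
  have "wirtbar (wirt g) x = ev (Dbt (Dt t)) x"
    using smooth_wirt_t[OF assms(1) conjunct1[OF wft_D[OF t(1)]] 1(1) assms(3)] by simp
  also have "\<dots> = ev (Dt (Dbt t)) x" using ev_sym[OF t(1) assms(3)] .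
  also have "\<dots> = wirt (wirtbar g) x"
    using smooth_wirt_t[OF assms(1) conjunct2[OF wft_D[OF t(1)]] 1(2) assms(3)] by simp
  finally show ?thesis .
qed

lemma smooth_const [intro]: "smooth U (\<lambda>x. c)"
  unfolding smooth_def by (rule exI[of _ "C c"]) simp

lemma smooth_poly [intro]: "smooth U (\<lambda>x. poly p x)"
  unfolding smooth_def by (rule exI[of _ "Pol p"]) simp

lemma smooth_add [intro]: "smooth U f \<Longrightarrow> smooth U g \<Longrightarrow> smooth U (\<lambda>x. f x + g x)"
  unfolding smooth_def
proof (elim exE conjE)
  fix a b assume "wft U a" "\<forall>x\<in>U. f x = ev a x" "wft U b" "\<forall>x\<in>U. g x = ev b x"
  then show "\<exists>t. wft U t \<and> (\<forall>x\<in>U. f x + g x = ev t x)" by (intro exI[of _ "Add a b"]) simp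
qed

lemma smooth_mult [intro]: "smooth U f \<Longrightarrow> smooth U g \<Longrightarrow> smooth U (\<lambda>x. f x * g x)"
  unfolding smooth_def
proof (elim exE conjE)
  fix a b assume "wft U a" "\<forall>x\<in>U. f x = ev a x" "wft U b" "\<forall>x\<in>U. g x = ev b x"
  then show "\<exists>t. wft U t \<and> (\<forall>x\<in>U. f x * g x = ev t x)" by (intro exI[of _ "Mul a b"]) simp
qed

lemma smooth_cnj [intro]: "smooth U f \<Longrightarrow> smooth U (\<lambda>x. cnj (f x))"
  unfolding smooth_def
proof (elim exE conjE)
  fix a assume "wft U a" "\<forall>x\<in>U. f x = ev a x"
  then show "\<exists>t. wft U t \<and> (\<forall>x\<in>U. cnj (f x) = ev t x)" by (intro exI[of _ "Cj a"]) simp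
qed

lemma smooth_inverse [intro]: "smooth U f \<Longrightarrow> (\<forall>x\<in>U. f x \<noteq> 0) \<Longrightarrow> smooth U (\<lambda>x. inverse (f x))"
  unfolding smooth_def
proof (elim exE conjE)
  fix a assume "wft U a" "\<forall>x\<in>U. f x = ev a x" "\<forall>x\<in>U. f x \<noteq> 0"
  then show "\<exists>t. wft U t \<and> (\<forall>x\<in>U. inverse (f x) = ev t x)" by (intro exI[of _ "Inv a"]) simp
qed

lemma smooth_uminus [intro]: "smooth U f \<Longrightarrow> smooth U (\<lambda>x. - f x)"
proof -
  assume "smooth U f"
  then have "smooth U (\<lambda>x. (-1) * f x)" by (rule smooth_mult[OF smooth_const])
  then show ?thesis by simp
qed

lemma smooth_diff [intro]: "smooth U f \<Longrightarrow> smooth U g \<Longrightarrow> smooth U (\<lambda>x. f x - g x)"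
proof -
  assume "smooth U f" "smooth U g"
  then have "smooth U (\<lambda>x. f x + - g x)" by (intro smooth_add smooth_uminus)
  then show ?thesis by simp
qed

lemma smooth_divide [intro]: "smooth U f \<Longrightarrow> smooth U g \<Longrightarrow> (\<forall>x\<in>U. g x \<noteq> 0) \<Longrightarrow> smooth U (\<lambda>x. f x / g x)"
proof -
  assume "smooth U f" "smooth U g" "\<forall>x\<in>U. g x \<noteq> 0"
  then have "smooth U (\<lambda>x. f x * inverse (g x))" by (intro smooth_mult smooth_inverse)
  then show ?thesis by (simp add: divide_inverse)
qed

lemma smooth_sum [intro]: "finite A \<Longrightarrow> (\<And>i. i \<in> A \<Longrightarrow> smooth U (f i)) \<Longrightarrow> smooth U (\<lambda>x. \<Sum>i\<in>A. f i x)"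
  by (induction A rule: finite_induct) (auto intro!: smooth_add)

lemma smooth_sum' [intro]: "(\<And>i. i < n \<Longrightarrow> smooth U (f i)) \<Longrightarrow> smooth U (\<lambda>x. \<Sum>i<(n::nat). f i x)"
  by (rule smooth_sum) simp_all

lemma smooth_mono: "smooth U f \<Longrightarrow> V \<subseteq> U \<Longrightarrow> smooth V f"
  unfolding smooth_def by (meson subsetD wft_mono)

lemma smooth_cong: "smooth U f \<Longrightarrow> (\<And>x. x \<in> U \<Longrightarrow> f x = g x) \<Longrightarrow> smooth U g"
  unfolding smooth_def by auto

lemma smooth_continuous: "open U \<Longrightarrow> smooth U f \<Longrightarrow> continuous_on U f"
  by (intro continuous_at_imp_continuous_on ballI has_derivative_continuous[OF smooth_hd]) auto

context
  fixes U :: "complex set" and x :: complex assumes U: "open U" "x \<in> U"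
begin

lemma W_const [simp]: "wirt (\<lambda>y. c) x = 0" "wirtbar (\<lambda>y. c) x = 0"
  using wirt_unique[of "\<lambda>y. c" "\<lambda>h. 0" x 0 0] by (auto intro: has_derivative_const)

lemma W_add:
  assumes "smooth U f" "smooth U g"
  shows "wirt (\<lambda>y. f y + g y) x = wirt f x + wirt g x"
        "wirtbar (\<lambda>y. f y + g y) x = wirtbar f x + wirtbar g x"
proof -
  have "((\<lambda>y. f y + g y) has_derivative (\<lambda>h. (wirt f x * h + wirtbar f x * cnj h) + (wirt g x * h + wirtbar g x * cnj h))) (at x)"
    using smooth_hd[OF U(1) assms(1) U(2)] smooth_hd[OF U(1) assms(2) U(2)] by (rule has_derivative_add)
  then have "wirt (\<lambda>y. f y + g y) x = wirt f x + wirt g x \<and> wirtbar (\<lambda>y. f y + g y) x = wirtbar f x + wirtbar g x"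
    by (rule wirt_unique) (simp add: algebra_simps )
  then show "wirt (\<lambda>y. f y + g y) x = wirt f x + wirt g x" "wirtbar (\<lambda>y. f y + g y) x = wirtbar f x + wirtbar g x" by simp_all
qed

lemma W_diff:
  assumes "smooth U f" "smooth U g"
  shows "wirt (\<lambda>y. f y - g y) x = wirt f x - wirt g x"
        "wirtbar (\<lambda>y. f y - g y) x = wirtbar f x - wirtbar g x"
proof -
  have "((\<lambda>y. f y - g y) has_derivative (\<lambda>h. (wirt f x * h + wirtbar f x * cnj h) - (wirt g x * h + wirtbar g x * cnj h))) (at x)"
    using smooth_hd[OF U(1) assms(1) U(2)] smooth_hd[OF U(1) assms(2) U(2)] by (rule has_derivative_diff)
  then have "wirt (\<lambda>y. f y - g y) x = wirt f x - wirt g x \<and> wirtbar (\<lambda>y. f y - g y) x = wirtbar f x - wirtbar g x"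
    by (rule wirt_unique) (simp add: algebra_simps )
  then show "wirt (\<lambda>y. f y - g y) x = wirt f x - wirt g x" "wirtbar (\<lambda>y. f y - g y) x = wirtbar f x - wirtbar g x" by simp_all
qed

lemma W_mult:
  assumes "smooth U f" "smooth U g"
  shows "wirt (\<lambda>y. f y * g y) x = wirt f x * g x + f x * wirt g x"
        "wirtbar (\<lambda>y. f y * g y) x = wirtbar f x * g x + f x * wirtbar g x"
proof -
  have "((\<lambda>y. f y * g y) has_derivative (\<lambda>h. f x * (wirt g x * h + wirtbar g x * cnj h) + (wirt f x * h + wirtbar f x * cnj h) * g x)) (at x)"
    using smooth_hd[OF U(1) assms(1) U(2)] smooth_hd[OF U(1) assms(2) U(2)] by (rule has_derivative_mult)
  then have "wirt (\<lambda>y. f y * g y) x = wirt f x * g x + f x * wirt g x \<and> wirtbar (\<lambda>y. f y * g y) x = wirtbar f x * g x + f x * wirtbar g x"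
    by (rule wirt_unique) (simp add: algebra_simps )
  then show "wirt (\<lambda>y. f y * g y) x = wirt f x * g x + f x * wirt g x" "wirtbar (\<lambda>y. f y * g y) x = wirtbar f x * g x + f x * wirtbar g x" by simp_all
qed

lemma W_cnj:
  assumes "smooth U f"
  shows "wirt (\<lambda>y. cnj (f y)) x = cnj (wirtbar f x)"
        "wirtbar (\<lambda>y. cnj (f y)) x = cnj (wirt f x)"
proof -
  have "((\<lambda>y. cnj (f y)) has_derivative (\<lambda>h. cnj (wirt f x * h + wirtbar f x * cnj h))) (at x)"
    using smooth_hd[OF U(1) assms(1) U(2)] by (rule has_derivative_cnj)
  then have "wirt (\<lambda>y. cnj (f y)) x = cnj (wirtbar f x) \<and> wirtbar (\<lambda>y. cnj (f y)) x = cnj (wirt f x)"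
    by (rule wirt_unique) (simp add: algebra_simps )
  then show "wirt (\<lambda>y. cnj (f y)) x = cnj (wirtbar f x)" "wirtbar (\<lambda>y. cnj (f y)) x = cnj (wirt f x)" by simp_all
qed

lemma W_inverse:
  assumes "smooth U f" "f x \<noteq> 0"
  shows "wirt (\<lambda>y. inverse (f y)) x = - wirt f x / (f x)^2"
        "wirtbar (\<lambda>y. inverse (f y)) x = - wirtbar f x / (f x)^2"
proof -
  have "((\<lambda>y. inverse (f y)) has_derivative (\<lambda>h. - (inverse (f x) * (wirt f x * h + wirtbar f x * cnj h) * inverse (f x)))) (at x)"
    using Deriv.has_derivative_inverse[OF assms(2) smooth_hd[OF U(1) assms(1) U(2)]] .
  then have "wirt (\<lambda>y. inverse (f y)) x = - wirt f x / (f x)^2 \<and> wirtbar (\<lambda>y. inverse (f y)) x = - wirtbar f x / (f x)^2"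
    by (rule wirt_unique) (simp add: algebra_simps power2_eq_square divide_inverse)
  then show "wirt (\<lambda>y. inverse (f y)) x = - wirt f x / (f x)^2" "wirtbar (\<lambda>y. inverse (f y)) x = - wirtbar f x / (f x)^2" by simp_all
qed

lemma W_divide:
  assumes "smooth U f" "smooth U g" "\<forall>y\<in>U. g y \<noteq> 0"
  shows "wirt (\<lambda>y. f y / g y) x = (wirt f x * g x - f x * wirt g x) / (g x)^2"
        "wirtbar (\<lambda>y. f y / g y) x = (wirtbar f x * g x - f x * wirtbar g x) / (g x)^2"
proof -
  have gi: "smooth U (\<lambda>y. inverse (g y))" using assms by blast
  have gx: "g x \<noteq> 0" using assms U by auto
  have e: "(\<lambda>y. f y / g y) = (\<lambda>y. f y * inverse (g y))" by (simp add: divide_inverse)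
  show "wirt (\<lambda>y. f y / g y) x = (wirt f x * g x - f x * wirt g x) / (g x)^2"
    unfolding e W_mult(1)[OF assms(1) gi] W_inverse(1)[OF assms(2) gx]
    using gx by (simp add: field_simps power2_eq_square)
  show "wirtbar (\<lambda>y. f y / g y) x = (wirtbar f x * g x - f x * wirtbar g x) / (g x)^2"
    unfolding e W_mult(2)[OF assms(1) gi] W_inverse(2)[OF assms(2) gx]
    using gx by (simp add: field_simps power2_eq_square)
qed

lemma W_sum_aux:
  "finite A \<Longrightarrow> (\<forall>i\<in>A. smooth U (f i)) \<Longrightarrow> wirt (\<lambda>y. \<Sum>i\<in>A. f i y) x = (\<Sum>i\<in>A. wirt (f i) x)
     \<and> wirtbar (\<lambda>y. \<Sum>i\<in>A. f i y) x = (\<Sum>i\<in>A. wirtbar (f i) x)"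
proof (induction A rule: finite_induct)
  case empty
  show ?case by simp
next
  case (insert a A)
  have s: "smooth U (\<lambda>y. \<Sum>i\<in>A. f i y)" using insert by (intro smooth_sum) auto
  have fa: "smooth U (f a)" using insert by auto
  show ?case using insert W_add[OF fa s] by simp
qed

lemma W_sum:
  assumes "finite A" "\<And>i. i \<in> A \<Longrightarrow> smooth U (f i)"
  shows "wirt (\<lambda>y. \<Sum>i\<in>A. f i y) x = (\<Sum>i\<in>A. wirt (f i) x)"
        "wirtbar (\<lambda>y. \<Sum>i\<in>A. f i y) x = (\<Sum>i\<in>A. wirtbar (f i) x)"
  using W_sum_aux[of A f] assms by auto

end



lemma herm_sym: "herm N u v = cnj (herm N v u)"
  unfolding herm_def by (simp add: mult.commute)

lemma herm_real: "cnj (herm N v v) = herm N v v"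
  using herm_sym[of N v v] by simp

lemma herm_smult_r: "herm N u (\<lambda>i. a * v i) = a * herm N u v"
  unfolding herm_def by (simp add: sum_distrib_left algebra_simps)

lemma herm_smult_l: "herm N (\<lambda>i. a * u i) v = cnj a * herm N u v"
  unfolding herm_def by (simp add: sum_distrib_left algebra_simps)

lemma herm_add_r: "herm N u (\<lambda>i. v i + w i) = herm N u v + herm N u w"
  unfolding herm_def by (simp add: sum.distrib algebra_simps)

lemma herm_diff_r: "herm N u (\<lambda>i. v i - w i) = herm N u v - herm N u w"
  unfolding herm_def by (simp add: sum_subtractf algebra_simps)

lemma herm_add_l: "herm N (\<lambda>i. u i + v i) w = herm N u w + herm N v w"
  unfolding herm_def by (simp add: sum.distrib algebra_simps)

lemma herm_diff_l: "herm N (\<lambda>i. u i - v i) w = herm N u w - herm N v w"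
  unfolding herm_def by (simp add: sum_subtractf algebra_simps)

lemma herm_pos: "(\<exists>i<N. v i \<noteq> 0) \<Longrightarrow> herm N v v \<noteq> 0"
proof -
  assume "\<exists>i<N. v i \<noteq> 0"
  then obtain i0 where i0: "i0 < N" "v i0 \<noteq> 0" by auto
  have e: "herm N v v = complex_of_real (\<Sum>i<N. (cmod (v i))^2)"
    unfolding herm_def of_real_sum
  proof (intro sum.cong refl)
    fix i show "cnj (v i) * v i = complex_of_real ((cmod (v i))\<^sup>2)"
      using complex_norm_square[of "v i"] by (simp add: mult.commute)
  qed
  have "(\<Sum>i<N. (cmod (v i))^2) > 0"
    using i0 by (intro sum_pos2[of _ i0]) auto
  then show ?thesis unfolding e by (simp del: of_real_sum of_real_power)
qed

lemma smooth_herm: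
  assumes "\<And>i. i < N \<Longrightarrow> smooth U (\<lambda>w. G w i)" "\<And>i. i < N \<Longrightarrow> smooth U (\<lambda>w. H w i)"
  shows "smooth U (\<lambda>w. herm N (G w) (H w))"
  unfolding herm_def using assms by (intro smooth_sum' smooth_mult smooth_cnj) auto

context
  fixes U :: "complex set" and x :: complex assumes U: "open U" "x \<in> U"
begin

lemma W_uminus:
  assumes "smooth U f"
  shows "wirt (\<lambda>y. - f y) x = - wirt f x" "wirtbar (\<lambda>y. - f y) x = - wirtbar f x"
proof -
  have "((\<lambda>y. - f y) has_derivative (\<lambda>h. - (wirt f x * h + wirtbar f x * cnj h))) (at x)"
    using smooth_hd[OF U(1) assms(1) U(2)] by (rule has_derivative_minus)
  then have "wirt (\<lambda>y. - f y) x = - wirt f x \<and> wirtbar (\<lambda>y. - f y) x = - wirtbar f x"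
    by (rule wirt_unique) (simp add: algebra_simps)
  then show "wirt (\<lambda>y. - f y) x = - wirt f x" "wirtbar (\<lambda>y. - f y) x = - wirtbar f x" by simp_all
qed

lemma W_herm:
  assumes "\<And>i. i < N \<Longrightarrow> smooth U (\<lambda>w. G w i)" "\<And>i. i < N \<Longrightarrow> smooth U (\<lambda>w. H w i)"
  shows "wirt (\<lambda>w. herm N (G w) (H w)) x =
           (\<Sum>i<N. cnj (wirtbar (\<lambda>w. G w i) x) * H x i + cnj (G x i) * wirt (\<lambda>w. H w i) x)"
        "wirtbar (\<lambda>w. herm N (G w) (H w)) x =
           (\<Sum>i<N. cnj (wirt (\<lambda>w. G w i) x) * H x i + cnj (G x i) * wirtbar (\<lambda>w. H w i) x)"
proof -
  have s: "\<And>i. i \<in> {..<N} \<Longrightarrow> smooth U (\<lambda>w. cnj (G w i) * H w i)"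
    using assms by (intro smooth_mult smooth_cnj) auto
  show "wirt (\<lambda>w. herm N (G w) (H w)) x =
           (\<Sum>i<N. cnj (wirtbar (\<lambda>w. G w i) x) * H x i + cnj (G x i) * wirt (\<lambda>w. H w i) x)" (is "_ = ?rhs")
  proof -
    have "wirt (\<lambda>w. herm N (G w) (H w)) x = (\<Sum>i<N. wirt (\<lambda>w. cnj (G w i) * H w i) x)"
      unfolding herm_def using W_sum(1)[OF U finite_lessThan s] by simp
    also have "\<dots> = ?rhs"
      using assms by (intro sum.cong refl) (simp add: W_mult[OF U] W_cnj[OF U] smooth_cnj)
    finally show ?thesis .
  qed
  show "wirtbar (\<lambda>w. herm N (G w) (H w)) x =
           (\<Sum>i<N. cnj (wirt (\<lambda>w. G w i) x) * H x i + cnj (G x i) * wirtbar (\<lambda>w. H w i) x)" (is "_ = ?rhs")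
  proof -
    have "wirtbar (\<lambda>w. herm N (G w) (H w)) x = (\<Sum>i<N. wirtbar (\<lambda>w. cnj (G w i) * H w i) x)"
      unfolding herm_def using W_sum(2)[OF U finite_lessThan s] by simp
    also have "\<dots> = ?rhs"
      using assms by (intro sum.cong refl) (simp add: W_mult[OF U] W_cnj[OF U] smooth_cnj)
    finally show ?thesis .
  qed
qed

end



locale flagset =
  fixes N :: nat and F :: "nat \<Rightarrow> complex \<Rightarrow> nat \<Rightarrow> complex" and U :: "complex set"
  assumes U: "open U"
    and F_suc: "\<And>k. F (Suc k) = Pplus N (F k)"
    and smF: "\<And>k i. k \<le> Suc (N - 2) \<Longrightarrow> smooth U (\<lambda>w. F k w i)"
    and nz: "\<And>k x. k \<le> N - 2 \<Longrightarrow> x \<in> U \<Longrightarrow> herm N (F k x) (F k x) \<noteq> 0"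
    and holo: "\<And>x i. x \<in> U \<Longrightarrow> wirtbar (\<lambda>w. F 0 w i) x = 0"
begin

definition n where "n k x = herm N (F k x) (F k x)"
definition d where "d k x i = wirt (\<lambda>w. F k w i) x"
definition db where "db k x i = wirtbar (\<lambda>w. F k w i) x"
definition be where "be k x = herm N (F k x) (d k x) / n k x"
definition c where "c k x = (if k = 0 then 0 else n k x / n (k - 1) x)"

lemma n_fun: "n k = (\<lambda>w. herm N (F k w) (F k w))" by (rule ext) (simp add: n_def)
lemma d_fun: "(\<lambda>w. d k w i) = wirt (\<lambda>w. F k w i)" by (rule ext) (simp add: d_def)
lemma db_fun: "(\<lambda>w. db k w i) = wirtbar (\<lambda>w. F k w i)" by (rule ext) (simp add: db_def)

lemma Fsuc: "F (Suc k) x i = d k x i - F k x i * be k x"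
  unfolding F_suc Pplus_def dvec_def d_def be_def n_def by simp

lemma Fsuc_fun: "(\<lambda>w. F (Suc k) w i) = (\<lambda>w. d k w i - F k w i * be k w)"
  by (rule ext) (rule Fsuc)

lemma n_real: "cnj (n k x) = n k x" unfolding n_def by (rule herm_real)
lemma c_real: "cnj (c k x) = c k x" unfolding c_def by (simp add: n_real)

lemma nz': "k \<le> N - 2 \<Longrightarrow> x \<in> U \<Longrightarrow> n k x \<noteq> 0" using nz unfolding n_def by auto

lemma nzU: "k \<le> N - 2 \<Longrightarrow> \<forall>x\<in>U. n k x \<noteq> 0" using nz' by auto

lemma sm_d: "k \<le> Suc (N - 2) \<Longrightarrow> smooth U (\<lambda>w. d k w i)"
  unfolding d_fun using smooth_wirt(1)[OF U smF] by auto

lemma sm_db: "k \<le> Suc (N - 2) \<Longrightarrow> smooth U (\<lambda>w. db k w i)"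
  unfolding db_fun using smooth_wirt(2)[OF U smF] by auto

lemma sm_n: "k \<le> Suc (N - 2) \<Longrightarrow> smooth U (n k)"
  unfolding n_fun by (rule smooth_herm) (auto intro: smF)

lemma sm_hd: "k \<le> Suc (N - 2) \<Longrightarrow> smooth U (\<lambda>w. herm N (F k w) (d k w))"
  by (rule smooth_herm) (auto intro: smF sm_d)

lemma sm_be: "k \<le> N - 2 \<Longrightarrow> smooth U (be k)"
proof -
  assume k: "k \<le> N - 2"
  have "smooth U (\<lambda>w. herm N (F k w) (d k w) / n k w)"
    using k by (intro smooth_divide sm_hd sm_n nzU) auto
  then show ?thesis unfolding be_def[abs_def] by simp
qed

lemma sm_c: "k \<le> N - 2 \<Longrightarrow> smooth U (c k)"
proof (cases "k = 0")
  case True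
  then have "c k = (\<lambda>w. 0)" unfolding c_def by auto
  then show ?thesis by auto
next
  case False
  assume k: "k \<le> N - 2"
  have "smooth U (\<lambda>w. n k w / n (k - 1) w)"
    using k by (intro smooth_divide sm_n nzU) auto
  then show ?thesis unfolding c_def[abs_def] using False by simp
qed

lemma herm_F_d: "k \<le> N - 2 \<Longrightarrow> x \<in> U \<Longrightarrow> herm N (F k x) (d k x) = be k x * n k x"
  unfolding be_def using nz' by simp

definition Dk where "Dk k = (\<forall>x\<in>U. \<forall>i. db k x i = - (c k x * F (k - 1) x i))"
definition Ok where "Ok j l = (\<forall>x\<in>U. herm N (F j x) (F l x) = 0)"

lemma cherm_zero:
  assumes "k \<ge> 1 \<Longrightarrow> Ok (k - 1) k" "x \<in> U"
  shows "c k x * herm N (F (k - 1) x) (F k x) = 0" "c k x * herm N (F k x) (F (k - 1) x) = 0"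
proof -
  show "c k x * herm N (F (k - 1) x) (F k x) = 0"
    using assms unfolding Ok_def c_def by (cases "k = 0") auto
  then show "c k x * herm N (F k x) (F (k - 1) x) = 0"
    using herm_sym[of N "F k x" "F (k - 1) x"] by (metis c_real complex_cnj_mult complex_cnj_zero_iff)
qed

lemma sum_db:
  assumes "Dk k" "x \<in> U"
  shows "(\<Sum>i<N. cnj (db k x i) * G i) = - (c k x * herm N (F (k - 1) x) G)"
  using assms unfolding Dk_def herm_def
  by (simp add: c_real sum_negf sum_distrib_left mult.assoc)

lemma sum_db':
  assumes "Dk k" "x \<in> U"
  shows "(\<Sum>i<N. cnj (G i) * db k x i) = - (c k x * herm N G (F (k - 1) x))"
  using assms unfolding Dk_def herm_def
  by (simp add: sum_negf sum_distrib_left algebra_simps)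

lemma dn:
  assumes k: "k \<le> N - 2" and D: "Dk k" and O: "k \<ge> 1 \<Longrightarrow> Ok (k - 1) k" and x: "x \<in> U"
  shows "wirt (n k) x = be k x * n k x" "wirtbar (n k) x = cnj (be k x) * n k x"
proof -
  have s: "\<And>i. i < N \<Longrightarrow> smooth U (\<lambda>w. F k w i)" using k by (intro smF) auto
  have "wirt (n k) x = (\<Sum>i<N. cnj (db k x i) * F k x i + cnj (F k x i) * d k x i)"
    using W_herm(1)[OF U(1) x s s] by (simp add: n_fun d_def db_def)
  also have "\<dots> = (\<Sum>i<N. cnj (db k x i) * F k x i) + herm N (F k x) (d k x)"
    unfolding herm_def by (simp add: sum.distrib)
  also have "\<dots> = be k x * n k x"
    using sum_db[OF D x, of "F k x"] cherm_zero(1)[OF O x] herm_F_d[OF k x] by simp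
  finally show "wirt (n k) x = be k x * n k x" .
  have "wirtbar (n k) x = (\<Sum>i<N. cnj (d k x i) * F k x i + cnj (F k x i) * db k x i)"
    using W_herm(2)[OF U(1) x s s] by (simp add: n_fun d_def db_def)
  also have "\<dots> = cnj (herm N (F k x) (d k x)) + (\<Sum>i<N. cnj (F k x i) * db k x i)"
    unfolding herm_def by (simp add: sum.distrib mult.commute)
  also have "\<dots> = cnj (be k x) * n k x"
    using sum_db'[OF D x, of "F k x"] cherm_zero(2)[OF O x] herm_F_d[OF k x] by (simp add: n_real)
  finally show "wirtbar (n k) x = cnj (be k x) * n k x" .
qed

end



context flagset begin

lemma Ostep:
  assumes k: "k \<le> N - 2" and j: "j \<le> k" and D: "\<forall>j'\<le>k. Dk j'" and O: "\<forall>j'<k. Ok j' k"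
  shows "Ok j (Suc k)"
  unfolding Ok_def
proof
  fix x assume x: "x \<in> U"
  have e: "herm N (F j x) (F (Suc k) x) = herm N (F j x) (d k x) - be k x * herm N (F j x) (F k x)"
    unfolding herm_def by (simp add: Fsuc sum_subtractf sum_distrib_left algebra_simps)
  show "herm N (F j x) (F (Suc k) x) = 0"
  proof (cases "j = k")
    case True
    then show ?thesis using e herm_F_d[OF k x] by (simp add: n_def)
  next
    case False
    then have jk: "j < k" using j by simp
    have Ojk: "\<forall>y\<in>U. herm N (F j y) (F k y) = 0" using O jk unfolding Ok_def by auto
    have Oj1: "herm N (F (j - 1) x) (F k x) = 0" using O jk x unfolding Ok_def
      by (metis diff_le_self le_less_trans)
    have w0: "wirt (\<lambda>w. herm N (F j w) (F k w)) x = 0"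
      using wirt_local[OF U x, of "\<lambda>w. herm N (F j w) (F k w)" "\<lambda>w. 0"] Ojk W_const[OF U x] by simp
    have sj: "\<And>i. i < N \<Longrightarrow> smooth U (\<lambda>w. F j w i)" and sk: "\<And>i. i < N \<Longrightarrow> smooth U (\<lambda>w. F k w i)"
      using k jk by (auto intro: smF)
    have "wirt (\<lambda>w. herm N (F j w) (F k w)) x = (\<Sum>i<N. cnj (db j x i) * F k x i + cnj (F j x i) * d k x i)"
      using W_herm(1)[OF U x sj sk] by (simp add: d_def db_def)
    also have "\<dots> = (\<Sum>i<N. cnj (db j x i) * F k x i) + herm N (F j x) (d k x)"
      unfolding herm_def by (simp add: sum.distrib)
    also have "\<dots> = herm N (F j x) (d k x)"
      using sum_db[of j x "F k x"] D jk x Oj1 by simp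
    finally have "herm N (F j x) (d k x) = 0" using w0 by simp
    then show ?thesis unfolding e using Ojk x by simp
  qed
qed

end



context flagset begin

lemma Dstep:
  assumes k1: "Suc k \<le> N - 2" and D: "\<forall>j\<le>k. Dk j" and O: "\<forall>l\<le>Suc k. \<forall>j<l. Ok j l"
  shows "Dk (Suc k)"
  unfolding Dk_def
proof (intro ballI allI)
  fix x i assume x: "x \<in> U"
  have k: "k \<le> N - 2" using k1 by simp
  have Dk: "Dk k" using D by simp
  have Ok: "k \<ge> 1 \<Longrightarrow> Ok (k - 1) k" using O by simp
  have dnk: "wirt (n k) x = be k x * n k x" "wirtbar (n k) x = cnj (be k x) * n k x"
    using dn[OF k Dk Ok x] by auto
  have nzk: "n k x \<noteq> 0" using nz' k x by simp
  have wc: "wirt (c k) x = c k x * (be k x - be (k - 1) x)"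
  proof (cases "k = 0")
    case True
    then have "c k = (\<lambda>w. 0)" unfolding c_def by auto
    then show ?thesis using W_const[OF U x] True by (simp add: c_def)
  next
    case False
    have ck: "c k = (\<lambda>w. n k w / n (k - 1) w)" using False by (intro ext) (simp add: c_def)
    have k1': "k - 1 \<le> N - 2" using k by simp
    have dnk1: "wirt (n (k - 1)) x = be (k - 1) x * n (k - 1) x"
      using dn[OF k1' _ _ x] D O False by simp
    have nzk1: "n (k - 1) x \<noteq> 0" using nz' k1' x by simp
    have "wirt (c k) x = (wirt (n k) x * n (k - 1) x - n k x * wirt (n (k - 1)) x) / (n (k - 1) x)^2"
      unfolding ck by (rule W_divide(1)[OF U x sm_n[of k] sm_n[of "k - 1"] nzU[OF k1']]) (use k in auto)
    also have "\<dots> = ((n k x * (be k x - be (k - 1) x)) * n (k - 1) x) / (n (k - 1) x * n (k - 1) x)"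
      unfolding dnk(1) dnk1 by (simp add: algebra_simps power2_eq_square)
    also have "\<dots> = n k x * (be k x - be (k - 1) x) / n (k - 1) x"
      using nzk1 by (rule nonzero_mult_divide_mult_cancel_right)
    finally show ?thesis by (simp add: c_def False)
  qed
  have cd: "c k x * d (k - 1) x j = c k x * (F k x j + be (k - 1) x * F (k - 1) x j)" for j
  proof (cases "k = 0")
    case True then show ?thesis by (simp add: c_def)
  next
    case False
    then have "F k x j = F (Suc (k - 1)) x j" by simp
    then show ?thesis unfolding Fsuc by simp
  qed
  have wbd: "wirtbar (\<lambda>w. d k w j) x = - (c k x * be k x * F (k - 1) x j) - c k x * F k x j" for j
  proof -
    have sF: "smooth U (\<lambda>w. F k w j)" using k by (intro smF) simp
    have sF1: "smooth U (\<lambda>w. F (k - 1) w j)" using k by (intro smF) simp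
    have "wirtbar (\<lambda>w. d k w j) x = wirt (\<lambda>w. db k w j) x"
      unfolding d_fun db_fun using smooth_sym[OF U sF x] .
    also have "\<dots> = wirt (\<lambda>w. - (c k w * F (k - 1) w j)) x"
      using wirt_local[OF U x, of "\<lambda>w. db k w j" "\<lambda>w. - (c k w * F (k - 1) w j)"] Dk
      unfolding Dk_def by simp
    also have "\<dots> = - (wirt (c k) x * F (k - 1) x j + c k x * d (k - 1) x j)"
      using W_uminus(1)[OF U x smooth_mult[OF sm_c[OF k] sF1]] W_mult(1)[OF U x sm_c[OF k] sF1]
      by (simp add: d_def)
    also have "\<dots> = - (c k x * be k x * F (k - 1) x j) - c k x * F k x j"
      unfolding wc cd by (simp add: algebra_simps)
    finally show ?thesis .
  qed
  have wbh: "wirtbar (\<lambda>w. herm N (F k w) (d k w)) x = herm N (d k x) (d k x) - c k x * n k x"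
  proof -
    have sF: "\<And>j. j < N \<Longrightarrow> smooth U (\<lambda>w. F k w j)" using k by (intro smF) simp
    have sd: "\<And>j. j < N \<Longrightarrow> smooth U (\<lambda>w. d k w j)" using k by (intro sm_d) simp
    have "wirtbar (\<lambda>w. herm N (F k w) (d k w)) x =
        (\<Sum>j<N. cnj (d k x j) * d k x j + cnj (F k x j) * (- (c k x * be k x * F (k - 1) x j) - c k x * F k x j))"
      using W_herm(2)[OF U x, of N "F k" "d k", OF sF sd] wbd by (simp add: d_def)
    also have "\<dots> = herm N (d k x) (d k x) - be k x * (c k x * herm N (F k x) (F (k - 1) x)) - c k x * n k x"
      unfolding herm_def n_def
      by (simp add: sum.distrib sum_subtractf sum_negf sum_distrib_left algebra_simps)
    also have "\<dots> = herm N (d k x) (d k x) - c k x * n k x"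
      using cherm_zero(2)[OF Ok x] by simp
    finally show ?thesis .
  qed
  have nS: "n (Suc k) x = herm N (d k x) (d k x) - cnj (be k x) * be k x * n k x"
  proof -
    have Fs: "F (Suc k) x = (\<lambda>j. d k x j - be k x * F k x j)"
      by (rule ext) (simp add: Fsuc mult.commute)
    have hdF: "herm N (d k x) (F k x) = cnj (be k x) * n k x"
      using herm_sym[of N "d k x" "F k x"] herm_F_d[OF k x] n_real by simp
    show ?thesis
      unfolding n_def Fs herm_diff_l herm_diff_r herm_smult_l herm_smult_r
      using hdF herm_F_d[OF k x] by (simp add: n_def algebra_simps)
  qed
  have wbe: "wirtbar (be k) x = n (Suc k) x / n k x - c k x"
  proof -
    have bek: "be k = (\<lambda>w. herm N (F k w) (d k w) / n k w)" by (rule ext) (simp add: be_def)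
    have "wirtbar (be k) x = (wirtbar (\<lambda>w. herm N (F k w) (d k w)) x * n k x - herm N (F k x) (d k x) * wirtbar (n k) x) / (n k x)^2"
      unfolding bek by (rule W_divide(2)[OF U x sm_hd[of k] sm_n[of k] nzU[OF k]]) (use k in auto)
    also have "\<dots> = ((herm N (d k x) (d k x) - c k x * n k x - be k x * cnj (be k x) * n k x) * n k x) / (n k x * n k x)"
      unfolding wbh dnk(2) herm_F_d[OF k x] by (simp add: algebra_simps power2_eq_square)
    also have "\<dots> = (herm N (d k x) (d k x) - c k x * n k x - be k x * cnj (be k x) * n k x) / n k x"
      using nzk by (rule nonzero_mult_divide_mult_cancel_right)
    also have "\<dots> = n (Suc k) x / n k x - c k x"
      unfolding nS using nzk by (simp add: field_simps)
    finally show ?thesis .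
  qed
  have sF: "smooth U (\<lambda>w. F k w i)" using k by (intro smF) simp
  have "db (Suc k) x i = wirtbar (\<lambda>w. d k w i - F k w i * be k w) x"
    unfolding db_def Fsuc_fun ..
  also have "\<dots> = wirtbar (\<lambda>w. d k w i) x - (db k x i * be k x + F k x i * wirtbar (be k) x)"
    using W_diff(2)[OF U x sm_d[of k i] smooth_mult[OF sF sm_be[OF k]]] W_mult(2)[OF U x sF sm_be[OF k]] k
    by (simp add: db_def)
  also have "\<dots> = - (c (Suc k) x * F (Suc k - 1) x i)"
    unfolding wbd wbe using Dk x nzk unfolding Dk_def by (simp add: c_def field_simps)
  finally show "db (Suc k) x i = - (c (Suc k) x * F (Suc k - 1) x i)" .
qed

end



lemma tr_sum:
  "trace_prod N (\<lambda>i l. \<Sum>k\<in>K. g k i l) (\<lambda>i l. \<Sum>m\<in>K. h m i l) = (\<Sum>k\<in>K. \<Sum>m\<in>K. trace_prod N (g k) (h m))"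
proof -
  have "trace_prod N (\<lambda>i l. \<Sum>k\<in>K. g k i l) (\<lambda>i l. \<Sum>m\<in>K. h m i l)
     = (\<Sum>i<N. \<Sum>l<N. \<Sum>k\<in>K. \<Sum>m\<in>K. g k i l * h m l i)"
    unfolding trace_prod_def by (simp add: sum_product)
  also have "\<dots> = (\<Sum>i<N. \<Sum>k\<in>K. \<Sum>l<N. \<Sum>m\<in>K. g k i l * h m l i)"
    by (rule sum.cong[OF refl], rule sum.swap)
  also have "\<dots> = (\<Sum>k\<in>K. \<Sum>i<N. \<Sum>l<N. \<Sum>m\<in>K. g k i l * h m l i)"
    by (rule sum.swap)
  also have "\<dots> = (\<Sum>k\<in>K. \<Sum>i<N. \<Sum>m\<in>K. \<Sum>l<N. g k i l * h m l i)"
    by (intro sum.cong refl, rule sum.swap)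
  also have "\<dots> = (\<Sum>k\<in>K. \<Sum>m\<in>K. \<Sum>i<N. \<Sum>l<N. g k i l * h m l i)"
    by (intro sum.cong refl, rule sum.swap)
  also have "\<dots> = (\<Sum>k\<in>K. \<Sum>m\<in>K. trace_prod N (g k) (h m))"
    unfolding trace_prod_def ..
  finally show ?thesis .
qed

lemma tr_lin:
  "trace_prod N (\<lambda>i l. a * (P i l - Q i l)) (\<lambda>i l. b * (R i l - S i l)) =
     a * b * (trace_prod N P R - trace_prod N P S - trace_prod N Q R + trace_prod N Q S)"
  unfolding trace_prod_def
  by (simp add: sum_subtractf sum.distrib sum_distrib_left algebra_simps)

lemma tr_zero: "trace_prod N (\<lambda>i l. 0) P = 0" "trace_prod N P (\<lambda>i l. 0) = 0"
  unfolding trace_prod_def by simp_all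

context flagset begin

lemma IND: "k \<le> N - 2 \<Longrightarrow> (\<forall>j\<le>k. Dk j) \<and> (\<forall>l\<le>Suc k. \<forall>j<l. Ok j l)"
proof (induction k)
  case 0
  have D0: "Dk 0" unfolding Dk_def db_def c_def using holo by simp
  have "Ok 0 1" using Ostep[of 0 0] D0 by simp
  then show ?case using D0 by (auto simp: le_Suc_eq)
next
  case (Suc k)
  then have IH: "(\<forall>j\<le>k. Dk j) \<and> (\<forall>l\<le>Suc k. \<forall>j<l. Ok j l)" by simp
  have DS: "Dk (Suc k)" using Dstep[OF Suc.prems] IH by simp
  have DA: "\<forall>j\<le>Suc k. Dk j" using IH DS le_Suc_eq by auto
  have O2: "Ok j (Suc (Suc k))" if "j \<le> Suc k" for j
    using Ostep[OF Suc.prems that DA] IH by simp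
  have "\<forall>l\<le>Suc (Suc k). \<forall>j<l. Ok j l"
  proof (intro allI impI)
    fix l j assume "l \<le> Suc (Suc k)" "j < l"
    then show "Ok j l" using IH O2 by (cases "l = Suc (Suc k)") auto
  qed
  then show ?case using DA by simp
qed

lemma orth:
  assumes "j \<le> Suc (N - 2)" "l \<le> Suc (N - 2)" "j \<noteq> l" "x \<in> U"
  shows "herm N (F j x) (F l x) = 0"
proof -
  have O: "\<forall>l\<le>Suc (N - 2). \<forall>j<l. Ok j l" using IND[of "N - 2"] by simp
  show ?thesis
  proof (cases "j < l")
    case True then show ?thesis using O assms unfolding Ok_def by auto
  next
    case False
    then have "herm N (F l x) (F j x) = 0" using O assms unfolding Ok_def by auto
    then show ?thesis using herm_sym[of N "F j x" "F l x"] by simp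
  qed
qed

lemma Dall: "k \<le> N - 2 \<Longrightarrow> Dk k" using IND[of "N - 2"] by simp

definition Pk where "Pk k w i l = F k w i * cnj (F k w l) / n k w"
definition A where "A k x i l = F (Suc k) x i * cnj (F k x l) / n k x"
definition A' where "A' k x = (if k = 0 then (\<lambda>i l. 0) else A (k - 1) x)"

lemma sm_Pk: "k \<le> N - 2 \<Longrightarrow> smooth U (\<lambda>w. Pk k w i l)"
  unfolding Pk_def by (intro smooth_divide smooth_mult smooth_cnj smF sm_n nzU) auto

lemma wP:
  assumes k: "k \<le> N - 2" and x: "x \<in> U"
  shows "wirt (\<lambda>w. Pk k w i l) x = A k x i l - A' k x i l"
proof -
  have nzk: "n k x \<noteq> 0" using nz' k x by simp
  have sFi: "smooth U (\<lambda>w. F k w i)" and sFl: "smooth U (\<lambda>w. F k w l)" using k by (auto intro: smF)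
  have sf: "smooth U (\<lambda>w. F k w i * cnj (F k w l))" using sFi sFl by (intro smooth_mult smooth_cnj)
  have Ok: "k \<ge> 1 \<Longrightarrow> Ok (k - 1) k" using IND[of "N - 2"] k by auto
  have dnk: "wirt (n k) x = be k x * n k x" using dn[OF k Dall[OF k] Ok x] by simp
  have wf: "wirt (\<lambda>w. F k w i * cnj (F k w l)) x = d k x i * cnj (F k x l) + F k x i * cnj (db k x l)"
    using W_mult(1)[OF U x sFi smooth_cnj[OF sFl]] W_cnj(1)[OF U x sFl] by (simp add: d_def db_def)
  have dbl: "db k x l = - (c k x * F (k - 1) x l)" using Dall[OF k] x unfolding Dk_def by simp
  have "wirt (\<lambda>w. Pk k w i l) x = (wirt (\<lambda>w. F k w i * cnj (F k w l)) x * n k x - F k x i * cnj (F k x l) * wirt (n k) x) / (n k x)^2"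
    unfolding Pk_def by (rule W_divide(1)[OF U x sf sm_n nzU[OF k]]) (use k in auto)
  also have "\<dots> = ((F (Suc k) x i * cnj (F k x l) - c k x * F k x i * cnj (F (k - 1) x l)) * n k x) / (n k x * n k x)"
    unfolding wf dnk dbl Fsuc by (simp add: c_real algebra_simps power2_eq_square)
  also have "\<dots> = (F (Suc k) x i * cnj (F k x l) - c k x * F k x i * cnj (F (k - 1) x l)) / n k x"
    using nzk by (rule nonzero_mult_divide_mult_cancel_right)
  also have "\<dots> = A k x i l - A' k x i l"
  proof (cases "k = 0")
    case True then show ?thesis by (simp add: A_def A'_def c_def)
  next
    case False
    have nzk1: "n (k - 1) x \<noteq> 0" using nz' k x by simp
    have "c k x * F k x i * cnj (F (k - 1) x l) / n k x = F k x i * cnj (F (k - 1) x l) / n (k - 1) x"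
      using nzk nzk1 False by (simp add: c_def field_simps)
    then show ?thesis using False by (simp add: A_def A'_def diff_divide_distrib)
  qed
  finally show ?thesis .
qed

lemma trA:
  assumes "a \<le> N - 2" "b \<le> N - 2" "x \<in> U"
  shows "trace_prod N (A a x) (A b x) = 0"
proof -
  have "trace_prod N (A a x) (A b x) = herm N (F b x) (F (Suc a) x) * herm N (F a x) (F (Suc b) x) / (n a x * n b x)"
    unfolding trace_prod_def herm_def A_def sum_product sum_divide_distrib
    by (intro sum.cong refl) (simp add: algebra_simps)
  moreover have "herm N (F b x) (F (Suc a) x) = 0 \<or> herm N (F a x) (F (Suc b) x) = 0"
  proof (cases "b = Suc a")
    case True
    then show ?thesis using orth[of a "Suc b" x] assms by simp
  next
    case False
    then show ?thesis using orth[of b "Suc a" x] assms by simp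
  qed
  ultimately show ?thesis by auto
qed

lemma trA':
  assumes "a \<le> N - 2" "b \<le> N - 2" "x \<in> U"
  shows "trace_prod N (A a x) (A' b x) = 0" "trace_prod N (A' a x) (A b x) = 0"
        "trace_prod N (A' a x) (A' b x) = 0"
  using assms trA[of a "b - 1" x] trA[of "a - 1" b x] trA[of "a - 1" "b - 1" x]
  by (auto simp: A'_def tr_zero)

lemma final_wirt:
  assumes x: "x \<in> U"
  shows "trace_prod N (\<lambda>i l. wirt (\<lambda>w. \<Sum>k\<le>N - 2. al k * Pk k w i l) x)
                      (\<lambda>i l. wirt (\<lambda>w. \<Sum>k\<le>N - 2. al k * Pk k w i l) x) = 0"
proof -
  have e: "wirt (\<lambda>w. \<Sum>k\<le>N - 2. al k * Pk k w i l) x = (\<Sum>k\<le>N - 2. al k * (A k x i l - A' k x i l))" for i l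
  proof -
    have "wirt (\<lambda>w. \<Sum>k\<le>N - 2. al k * Pk k w i l) x = (\<Sum>k\<le>N - 2. wirt (\<lambda>w. al k * Pk k w i l) x)"
      by (rule W_sum(1)[OF U x]) (auto intro: smooth_mult sm_Pk)
    also have "\<dots> = (\<Sum>k\<le>N - 2. al k * (A k x i l - A' k x i l))"
    proof (intro sum.cong refl)
      fix k assume "k \<in> {..N - 2}"
      then have k: "k \<le> N - 2" by simp
      show "wirt (\<lambda>w. al k * Pk k w i l) x = al k * (A k x i l - A' k x i l)"
        using W_mult(1)[OF U x smooth_const sm_Pk[OF k]] W_const[OF U x] wP[OF k x] by simp
    qed
    finally show ?thesis .
  qed
  show ?thesis
    unfolding e tr_sum tr_lin
    using trA trA' x by (intro sum.neutral ballI) auto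
qed

end



lemma tr_cnj: "trace_prod N (\<lambda>i j. cnj (X j i)) (\<lambda>i j. cnj (X j i)) = cnj (trace_prod N X X)"
proof -
  have "trace_prod N (\<lambda>i j. cnj (X j i)) (\<lambda>i j. cnj (X j i)) = (\<Sum>i<N. \<Sum>j<N. cnj (X j i * X i j))"
    unfolding trace_prod_def by simp
  also have "\<dots> = (\<Sum>j<N. \<Sum>i<N. cnj (X j i * X i j))" by (rule sum.swap)
  also have "\<dots> = cnj (trace_prod N X X)" unfolding trace_prod_def cnj_sum by simp
  finally show ?thesis .
qed

lemma build_U:
  fixes N :: nat and F :: "nat \<Rightarrow> complex \<Rightarrow> nat \<Rightarrow> complex" and z :: complex
  assumes F_suc: "\<And>k. F (Suc k) = Pplus N (F k)"
    and F0: "\<And>i. smooth UNIV (\<lambda>w. F 0 w i)"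
    and defd: "\<And>k. k \<le> M \<Longrightarrow> herm N (F k z) (F k z) \<noteq> 0"
  shows "k \<le> Suc M \<Longrightarrow> \<exists>U. open U \<and> z \<in> U \<and> (\<forall>j\<le>k. \<forall>i. smooth U (\<lambda>w. F j w i))
             \<and> (\<forall>j<k. \<forall>x\<in>U. herm N (F j x) (F j x) \<noteq> 0)"
proof (induction k)
  case 0
  show ?case using F0 by (intro exI[of _ UNIV]) auto
next
  case (Suc k)
  then obtain U where U: "open U" "z \<in> U" "\<forall>j\<le>k. \<forall>i. smooth U (\<lambda>w. F j w i)"
      "\<forall>j<k. \<forall>x\<in>U. herm N (F j x) (F j x) \<noteq> 0" by auto
  have kM: "k \<le> M" using Suc.prems by simp
  define V where "V = U \<inter> (\<lambda>x. herm N (F k x) (F k x)) -` (- {0})"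
  have smk: "\<And>i. smooth U (\<lambda>w. F k w i)" using U by auto
  have hs: "smooth U (\<lambda>x. herm N (F k x) (F k x))" using smk by (intro smooth_herm)
  have oV: "open V" unfolding V_def
    by (rule continuous_open_preimage[OF smooth_continuous[OF U(1) hs] U(1)]) auto
  have zV: "z \<in> V" unfolding V_def using U(2) defd[OF kM] by auto
  have VU: "V \<subseteq> U" unfolding V_def by auto
  have nzV: "\<forall>x\<in>V. herm N (F k x) (F k x) \<noteq> 0" unfolding V_def by auto
  have smkV: "\<And>i. smooth V (\<lambda>w. F k w i)" using smooth_mono[OF smk VU] .
  have swV: "\<And>i. smooth V (\<lambda>w. wirt (\<lambda>w. F k w i) w)"
    using smooth_wirt(1)[OF oV smkV] by simp
  have "smooth V (\<lambda>w. F (Suc k) w i)" for i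
  proof -
    have "smooth V (\<lambda>w. wirt (\<lambda>w. F k w i) w - F k w i *
             herm N (F k w) (\<lambda>i. wirt (\<lambda>w. F k w i) w) / herm N (F k w) (F k w))"
      by (intro smooth_diff smooth_mult smooth_divide smooth_herm swV smkV nzV)
    then show ?thesis unfolding F_suc Pplus_def dvec_def by simp
  qed
  then have "\<forall>j\<le>Suc k. \<forall>i. smooth V (\<lambda>w. F j w i)"
    using U(3) smooth_mono[OF _ VU] le_Suc_eq by auto
  moreover have "\<forall>j<Suc k. \<forall>x\<in>V. herm N (F j x) (F j x) \<noteq> 0"
    using U(4) VU nzV less_Suc_eq by auto
  ultimately show ?case using oV zV by blast
qed

theorem mainTheorem1:
  fixes N :: nat and p :: "nat \<Rightarrow> complex poly" and \<alpha> :: "nat \<Rightarrow> real"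
    and f :: "complex \<Rightarrow> nat \<Rightarrow> complex" and PP :: "complex \<Rightarrow> nat \<Rightarrow> nat \<Rightarrow> complex"
    and z :: complex
  assumes N2: "N \<ge> 2"
    and f_def: "f = (\<lambda>\<zeta> i. poly (p i) \<zeta>)"
    and linindep: "\<And>c :: nat \<Rightarrow> complex.
        (\<forall>\<zeta>. (\<Sum>i<N. c i * poly (p i) \<zeta>) = 0) \<Longrightarrow> (\<forall>i<N. c i = 0)"
    and PP_def: "PP = (\<lambda>\<zeta> i j. \<Sum>k\<le>N - 2. complex_of_real (\<alpha> k) * proj N f k \<zeta> i j)"
    and defined: "\<forall>k\<le>N - 2. (\<exists>i<N. (Pplus N ^^ k) f z i \<noteq> 0)"
  shows "trace_prod N (\<lambda>i j. wirt (\<lambda>\<zeta>. PP \<zeta> i j) z) (\<lambda>i j. wirt (\<lambda>\<zeta>. PP \<zeta> i j) z) = 0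
       \<and> trace_prod N (\<lambda>i j. wirtbar (\<lambda>\<zeta>. PP \<zeta> i j) z) (\<lambda>i j. wirtbar (\<lambda>\<zeta>. PP \<zeta> i j) z) = 0"
proof -
  define F where "F = (\<lambda>k. (Pplus N ^^ k) f)"
  have F_suc: "\<And>k. F (Suc k) = Pplus N (F k)" unfolding F_def by simp
  have F0: "\<And>w i. F 0 w i = poly (p i) w" unfolding F_def f_def by simp
  have F0s: "\<And>i. smooth UNIV (\<lambda>w. F 0 w i)" unfolding F0 by (rule smooth_poly)
  have defd: "\<And>k. k \<le> N - 2 \<Longrightarrow> herm N (F k z) (F k z) \<noteq> 0"
    using defined herm_pos unfolding F_def by blast
  obtain U where U: "open U" "z \<in> U" "\<forall>j\<le>Suc (N - 2). \<forall>i. smooth U (\<lambda>w. F j w i)"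
      "\<forall>j<Suc (N - 2). \<forall>x\<in>U. herm N (F j x) (F j x) \<noteq> 0"
    using build_U[where M="N - 2" and k="Suc (N - 2)", OF F_suc F0s defd] by auto
  have holo: "wirtbar (\<lambda>w. F 0 w i) x = 0" for x i
  proof -
    have "((\<lambda>w. poly (p i) w) has_derivative (\<lambda>h. poly (pderiv (p i)) x * h)) (at x)"
      using poly_DERIV[of "p i" x] by (simp add: has_field_derivative_def)
    then have "wirt (\<lambda>w. poly (p i) w) x = poly (pderiv (p i)) x \<and> wirtbar (\<lambda>w. poly (p i) w) x = 0"
      by (rule wirt_unique) simp
    then show ?thesis unfolding F0 by simp
  qed
  interpret fs: flagset N F U
    by unfold_locales (use U F_suc holo in auto)
  have PPe: "PP = (\<lambda>\<zeta> i j. \<Sum>k\<le>N - 2. complex_of_real (\<alpha> k) * fs.Pk k \<zeta> i j)"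
    unfolding fs.Pk_def fs.n_def unfolding PP_def proj_def Let_def F_def by simp
  have first: "trace_prod N (\<lambda>i j. wirt (\<lambda>\<zeta>. PP \<zeta> i j) z) (\<lambda>i j. wirt (\<lambda>\<zeta>. PP \<zeta> i j) z) = 0"
    unfolding PPe using fs.final_wirt[OF U(2)] .
  have smPP: "smooth U (\<lambda>\<zeta>. PP \<zeta> i j)" for i j
    unfolding PPe by (intro smooth_sum smooth_mult smooth_const fs.sm_Pk) auto
  have cPP: "(\<lambda>\<zeta>. PP \<zeta> i j) = (\<lambda>\<zeta>. cnj (PP \<zeta> j i))" for i j
    unfolding PPe fs.Pk_def cnj_sum
    by (intro ext sum.cong refl) (simp add: fs.n_real)
  have wb: "wirtbar (\<lambda>\<zeta>. PP \<zeta> i j) z = cnj (wirt (\<lambda>\<zeta>. PP \<zeta> j i) z)" for i j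
    unfolding cPP[of i j] by (rule W_cnj(2)[OF U(1,2) smPP])
  have "trace_prod N (\<lambda>i j. wirtbar (\<lambda>\<zeta>. PP \<zeta> i j) z) (\<lambda>i j. wirtbar (\<lambda>\<zeta>. PP \<zeta> i j) z)
      = cnj (trace_prod N (\<lambda>i j. wirt (\<lambda>\<zeta>. PP \<zeta> i j) z) (\<lambda>i j. wirt (\<lambda>\<zeta>. PP \<zeta> i j) z))"
    unfolding wb by (rule tr_cnj)
  then show ?thesis using first by simp
qed


end
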